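(* Let $T$ be a triangle of type $(90^\circ,60^\circ,30^\circ)$. Then $h(n,T)\le\frac{n^3}{16}$ for every positive integer $n$.
   Context: A triangle is of type $(\alpha,\beta,\gamma)$ if $\alpha\ge\beta\ge\gamma$ are its interior angles in degrees. For a triangle $T$ with side lengths $a,b,c$ and $\varepsilon>0$, with $\varepsilon'=\varepsilon\min\{a,b,c\}$, a triangle $A'B'C'$ is $\varepsilon$-congruent to $T$ if there are $A,B,C\in\mathbb{R}^2$ with $ABC$ congruent to $T$ and $A',B',C'$ within distance $\varepsilon'$ of $A,B,C$ respectively. $h(n,T,\varepsilon)$ is the maximum over $n$-point sets $P\subseteq\mathbb{R}^2$ of the number of 3-subsets of $P$ forming triangles $\varepsilon$-congruent to $T$, and $h(n,T)=\min_{\varepsilon>0}h(n,T,\varepsilon)$. *)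

theory Defs
  imports "HOL-Analysis.Analysis"
begin

type_synonym pt = "real^2"

definition angle_at :: "pt \<Rightarrow> pt \<Rightarrow> pt \<Rightarrow> real" where
  "angle_at A B C = arccos (((B - A) \<bullet> (C - A)) / (norm (B - A) * norm (C - A)))"

definition triangle_type :: "pt \<times> pt \<times> pt \<Rightarrow> real \<Rightarrow> real \<Rightarrow> real \<Rightarrow> bool" where
  "triangle_type T \<alpha> \<beta> \<gamma> \<longleftrightarrow>
     (case T of (A, B, C) \<Rightarrow>
        A \<noteq> B \<and> B \<noteq> C \<and> A \<noteq> C \<and> \<alpha> \<ge> \<beta> \<and> \<beta> \<ge> \<gamma> \<and>
        {#angle_at A B C, angle_at B C A, angle_at C A B#}
          = {#\<alpha> * pi / 180, \<beta> * pi / 180, \<gamma> * pi / 180#})"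

definition min_side :: "pt \<times> pt \<times> pt \<Rightarrow> real" where
  "min_side T = (case T of (A, B, C) \<Rightarrow> min (dist A B) (min (dist B C) (dist A C)))"

definition eps_congruent :: "real \<Rightarrow> pt \<times> pt \<times> pt \<Rightarrow> pt \<Rightarrow> pt \<Rightarrow> pt \<Rightarrow> bool" where
  "eps_congruent \<epsilon> T A' B' C' \<longleftrightarrow>
     (case T of (TA, TB, TC) \<Rightarrow>
       (\<exists>A B C. dist A B = dist TA TB \<and> dist B C = dist TB TC \<and> dist A C = dist TA TC \<and>
          dist A' A \<le> \<epsilon> * min_side T \<and> dist B' B \<le> \<epsilon> * min_side T \<and>
          dist C' C \<le> \<epsilon> * min_side T))"

definition count_cong :: "real \<Rightarrow> pt \<times> pt \<times> pt \<Rightarrow> pt set \<Rightarrow> nat" where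
  "count_cong \<epsilon> T P = card {S. S \<subseteq> P \<and> card S = 3 \<and>
       (\<exists>a b c. S = {a, b, c} \<and> eps_congruent \<epsilon> T a b c)}"

definition h_eps :: "nat \<Rightarrow> pt \<times> pt \<times> pt \<Rightarrow> real \<Rightarrow> nat" where
  "h_eps n T \<epsilon> = Sup {count_cong \<epsilon> T P | P. finite P \<and> card P = n}"

definition h :: "nat \<Rightarrow> pt \<times> pt \<times> pt \<Rightarrow> nat" where
  "h n T = Inf {h_eps n T \<epsilon> | \<epsilon>. \<epsilon> > 0}"

end

theory Submission
  imports Defs
begin



lemma mset3: "{#a,b,c#} = {#x,y,z#} \<Longrightarrow> x\<noteq>y \<Longrightarrow> y\<noteq>z \<Longrightarrow> x\<noteq>z \<Longrightarrow>
  (a=x\<and>b=y\<and>c=z)\<or>(a=x\<and>b=z\<and>c=y)\<or>(a=y\<and>b=x\<and>c=z)\<or>(a=y\<and>b=z\<and>c=x)\<or>(a=z\<and>b=x\<and>c=y)\<or>(a=z\<and>b=y\<and>c=x)"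
  by (auto simp: add_eq_conv_diff diff_single_trivial split: if_splits)

definition rb :: "real \<Rightarrow> real \<Rightarrow> real \<Rightarrow> bool" where
  "rb a b c \<longleftrightarrow> {a,b,c} = {1,3,4}"

lemma angle_sym: "angle_at A B C = angle_at A C B"
  unfolding angle_at_def by (simp add: inner_commute mult.commute)

lemma cos_angle:
  assumes "A \<noteq> B" "A \<noteq> C"
  shows "cos (angle_at A B C) = ((B - A) \<bullet> (C - A)) / (norm (B - A) * norm (C - A))"
proof -
  let ?t = "((B - A) \<bullet> (C - A)) / (norm (B - A) * norm (C - A))"
  have pos: "norm (B - A) * norm (C - A) > 0" using assms by auto
  have "\<bar>(B - A) \<bullet> (C - A)\<bar> \<le> norm (B - A) * norm (C - A)"
    by (rule Cauchy_Schwarz_ineq2)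
  hence "\<bar>?t\<bar> \<le> 1" using pos by (simp add: abs_divide divide_le_eq_1)
  hence "-1 \<le> ?t" "?t \<le> 1" by linarith+
  thus ?thesis unfolding angle_at_def by (simp add: cos_arccos)
qed

lemma rightcase:
  assumes d: "R \<noteq> X" "R \<noteq> Y" "X \<noteq> Y"
    and a1: "angle_at R X Y = pi/2" and a2: "angle_at X R Y = pi/3"
  shows "dist X Y = 2 * dist R X \<and> (dist R Y)^2 = 3 * (dist R X)^2"
proof -
  define u where "u = X - R"
  define v where "v = Y - R"
  have nu: "norm u > 0" using d u_def by auto
  have c1: "cos (angle_at R X Y) = (u \<bullet> v) / (norm u * norm v)"
    using cos_angle[of R X Y] d u_def v_def by simp
  have nv: "norm v > 0" using d v_def by auto
  have uv: "u \<bullet> v = 0" using c1 a1 nu nv by simp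
  have e1: "R - X = - u" "Y - X = v - u" using u_def v_def by auto
  have c2: "cos (angle_at X R Y) = ((- u) \<bullet> (v - u)) / (norm u * norm (v - u))"
    using cos_angle[of X R Y] d e1 by (simp add: norm_minus_commute)
  have nvu: "norm (v - u) > 0" using d e1(2)[symmetric] by auto
  have "(- u) \<bullet> (v - u) = u \<bullet> u" using uv by (simp add: inner_diff_right)
  hence "u \<bullet> u = (1/2) * (norm u * norm (v - u))" using c2 a2 nu nvu by (simp add: cos_60 field_simps)
  hence "norm u * norm u = (1/2) * (norm u * norm (v - u))" by (simp add: power2_eq_square[symmetric] power2_norm_eq_inner[symmetric])
  hence h1: "norm (v - u) = 2 * norm u" using nu by (simp add: algebra_simps)
  have "(norm (v - u))^2 = (norm v)^2 + (norm u)^2"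
    using uv by (simp add: power2_norm_eq_inner inner_diff_left inner_diff_right inner_commute)
  hence "(norm v)^2 = 3 * (norm u)^2" using h1 by (simp add: power_mult_distrib)
  moreover have "dist X Y = norm (v - u)" "dist R X = norm u" "dist R Y = norm v"
    using u_def v_def by (auto simp: dist_norm norm_minus_commute)
  ultimately show ?thesis using h1 by simp
qed

definition PP :: "real \<Rightarrow> real \<Rightarrow> real \<Rightarrow> bool" where
  "PP x y z \<longleftrightarrow> (\<exists>c>0. min x (min y z) = c \<and> rb (x^2/c^2) (y^2/c^2) (z^2/c^2))"

lemma rb132: assumes "rb a b c" shows "rb a c b"
proof -
  have "{a,c,b} = {a,b,c}" by auto
  thus ?thesis using assms unfolding rb_def by simp
qed
lemma rb213: assumes "rb a b c" shows "rb b a c"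
proof -
  have "{b,a,c} = {a,b,c}" by auto
  thus ?thesis using assms unfolding rb_def by simp
qed
lemma P132: assumes "PP x y z" shows "PP x z y"
proof -
  obtain c where "c>0" "min x (min y z) = c" "rb (x^2/c^2) (y^2/c^2) (z^2/c^2)" using assms unfolding PP_def by blast
  moreover have "min x (min z y) = min x (min y z)" by (simp add: min.commute)
  ultimately show ?thesis unfolding PP_def using rb132 by metis
qed
lemma P213: assumes "PP x y z" shows "PP y x z"
proof -
  obtain c where "c>0" "min x (min y z) = c" "rb (x^2/c^2) (y^2/c^2) (z^2/c^2)" using assms unfolding PP_def by blast
  moreover have "min y (min x z) = min x (min y z)" by (simp add: min.left_commute)
  ultimately show ?thesis unfolding PP_def using rb213 by metis
qed
lemma Pyzx: assumes "PP x y z" shows "PP y z x" using P132[OF P213[OF assms]] .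
lemma Pzxy: assumes "PP x y z" shows "PP z x y" using P213[OF P132[OF assms]] .
lemma P321: assumes "PP x y z" shows "PP z y x" using P132[OF Pzxy[OF assms]] .

lemma PP_base: assumes "c > 0" "s \<ge> 0" "s^2 = 3*c^2" shows "PP c (2*c) s"
proof -
  have "c^2 \<ge> 0" by simp
  hence "c^2 \<le> s^2" using assms(3) by linarith
  hence "s \<ge> c" by (rule power2_le_imp_le[OF _ assms(2)])
  hence "min c (min (2*c) s) = c" using assms by (simp add: min_def)
  moreover have "c^2/c^2 = 1" "(2*c)^2/c^2 = 4" "s^2/c^2 = 3" using assms by (auto simp: power_mult_distrib)
  moreover have "rb 1 4 3" unfolding rb_def by auto
  ultimately have "min c (min (2*c) s) = c \<and> rb (c^2/c^2) ((2*c)^2/c^2) (s^2/c^2)" by simp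
  thus ?thesis unfolding PP_def using assms by blast
qed

lemma rc_PP:
  assumes "R \<noteq> X" "R \<noteq> Y" "X \<noteq> Y" "angle_at R X Y = pi/2" "angle_at X R Y = pi/3"
  shows "PP (dist R X) (dist X Y) (dist R Y)"
proof -
  from rightcase[OF assms] have "dist X Y = 2 * dist R X" "(dist R Y)^2 = 3 * (dist R X)^2" by auto
  moreover have "dist R X > 0" using assms by simp
  ultimately show ?thesis using PP_base[of "dist R X" "dist R Y"] by simp
qed

lemma tri_sides:
  assumes "triangle_type (A, B, C) 90 60 30"
  shows "PP (dist A B) (dist B C) (dist A C)"
proof -
  have d: "A \<noteq> B" "B \<noteq> C" "A \<noteq> C" using assms unfolding triangle_type_def by auto
  have d': "B \<noteq> A" "C \<noteq> B" "C \<noteq> A" using d by auto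
  have m: "{#angle_at A B C, angle_at B C A, angle_at C A B#} = {#pi/2, pi/3, pi/6#}"
    using assms unfolding triangle_type_def by simp
  have ne: "pi/2 \<noteq> pi/3" "pi/3 \<noteq> pi/6" "pi/2 \<noteq> pi/6" by (simp_all add: field_simps)
  note cs = mset3[OF m ne]
  have sA: "angle_at A C B = angle_at A B C" by (rule angle_sym)
  have sB: "angle_at B A C = angle_at B C A" by (rule angle_sym)
  have sC: "angle_at C B A = angle_at C A B" by (rule angle_sym)
  have dAB: "dist B A = dist A B" "dist C B = dist B C" "dist C A = dist A C" by (simp_all add: dist_commute)
  { assume h: "angle_at A B C = pi/2" "angle_at B C A = pi/3"
    have "PP (dist A B) (dist B C) (dist A C)" using rc_PP[OF d(1) d(3) d(2) h(1) h(2)[folded sB]] . }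
  moreover
  { assume h: "angle_at A B C = pi/2" "angle_at C A B = pi/3"
    have "PP (dist A C) (dist C B) (dist A B)" using rc_PP[OF d(3) d(1) d'(2) h(1)[folded sA] h(2)] .
    from P321[OF this] have "PP (dist A B) (dist B C) (dist A C)" by (simp only: dAB) }
  moreover
  { assume h: "angle_at B C A = pi/2" "angle_at A B C = pi/3"
    have "PP (dist B A) (dist A C) (dist B C)" using rc_PP[OF d'(1) d(2) d(3) h(1)[folded sB] h(2)] .
    from P132[OF this] have "PP (dist A B) (dist B C) (dist A C)" by (simp only: dAB) }
  moreover
  { assume h: "angle_at B C A = pi/2" "angle_at C A B = pi/3"
    have "PP (dist B C) (dist C A) (dist B A)" using rc_PP[OF d(2) d'(1) d'(3) h(1) h(2)[folded sC]] .
    from Pzxy[OF this] have "PP (dist A B) (dist B C) (dist A C)" by (simp only: dAB) }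
  moreover
  { assume h: "angle_at C A B = pi/2" "angle_at A B C = pi/3"
    have "PP (dist C A) (dist A B) (dist C B)" using rc_PP[OF d'(3) d'(2) d(1) h(1) h(2)[folded sA]] .
    from Pyzx[OF this] have "PP (dist A B) (dist B C) (dist A C)" by (simp only: dAB) }
  moreover
  { assume h: "angle_at C A B = pi/2" "angle_at B C A = pi/3"
    have "PP (dist C B) (dist B A) (dist C A)" using rc_PP[OF d'(2) d'(3) d'(1) h(1)[folded sC] h(2)] .
    from P213[OF this] have "PP (dist A B) (dist B C) (dist A C)" by (simp only: dAB) }
  ultimately show ?thesis using cs by blast
qed



definition Q4 :: "real \<Rightarrow> real \<Rightarrow> real \<Rightarrow> real \<Rightarrow> real \<Rightarrow> real \<Rightarrow> real" where
 "Q4 a b c d e f = - d*e*f + c*d*f + c*d*e - c*d*d - c*c*d + b*e*f - b*e*e + b*d*e - b*c*f + b*c*e + b*c*d - b*b*e - a*f*f + a*e*f + a*d*f + a*c*f - a*c*e + a*c*d + a*b*f + a*b*e - a*b*d - a*a*f"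

definition C3 :: "real \<Rightarrow> bool" where "C3 a \<longleftrightarrow> a = 1 \<or> a = 3 \<or> a = 4"

lemma rb_iff: "rb a b c \<longleftrightarrow> (a=1\<and>b=3\<and>c=4)\<or>(a=1\<and>b=4\<and>c=3)\<or>(a=3\<and>b=1\<and>c=4)\<or>(a=3\<and>b=4\<and>c=1)\<or>(a=4\<and>b=1\<and>c=3)\<or>(a=4\<and>b=3\<and>c=1)"
proof
  assume h: "rb a b c"
  hence m: "a \<in> {1,3,4}" "b \<in> {1,3,4}" "c \<in> {1,3,4}" "1 \<in> {a,b,c}" "3 \<in> {a,b,c}" "4 \<in> {a,b,c}"
    unfolding rb_def by (metis insertI1 insertI2)+
  from m(1) have "a = 1 \<or> a = 3 \<or> a = 4" by simp
  moreover from m(2) have "b = 1 \<or> b = 3 \<or> b = 4" by simp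
  moreover from m(3) have "c = 1 \<or> c = 3 \<or> c = 4" by simp
  ultimately show "(a=1\<and>b=3\<and>c=4)\<or>(a=1\<and>b=4\<and>c=3)\<or>(a=3\<and>b=1\<and>c=4)\<or>(a=3\<and>b=4\<and>c=1)\<or>(a=4\<and>b=1\<and>c=3)\<or>(a=4\<and>b=3\<and>c=1)"
    using m(4,5,6) by (elim disjE; simp)
next
  assume "(a=1\<and>b=3\<and>c=4)\<or>(a=1\<and>b=4\<and>c=3)\<or>(a=3\<and>b=1\<and>c=4)\<or>(a=3\<and>b=4\<and>c=1)\<or>(a=4\<and>b=1\<and>c=3)\<or>(a=4\<and>b=3\<and>c=1)"
  thus "rb a b c" unfolding rb_def by (elim disjE conjE; simp add: insert_commute)
qed

lemma rb_C3: "rb a b c \<Longrightarrow> C3 a \<and> C3 b \<and> C3 c" unfolding rb_iff C3_def by auto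

lemma rb4: "rb 4 a b \<Longrightarrow> (a=1\<and>b=3) \<or> (a=3\<and>b=1)" by (simp add: rb_iff)
lemma rb1: "rb 1 a b \<Longrightarrow> (a=3\<and>b=4) \<or> (a=4\<and>b=3)" by (simp add: rb_iff)

lemma N1: "C3 b' \<Longrightarrow> rb 4 a b \<Longrightarrow> Q4 4 4 a c0 b b' = 0 \<Longrightarrow> c0 = 1 \<or> c0 = 3 \<Longrightarrow> False"
  unfolding C3_def by (drule rb4) (elim disjE conjE; simp add: Q4_def)

lemma N2: "C3 b' \<Longrightarrow> rb 4 a b \<Longrightarrow> Q4 4 4 a 4 b b' = 0 \<Longrightarrow>
   (a=1\<and>b=3\<and>b'=1) \<or> (a=3\<and>b=1\<and>b'=1)"
  unfolding C3_def by (drule rb4) (elim disjE conjE; simp add: Q4_def)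

lemma N3: "C3 qy \<Longrightarrow> C3 qz \<Longrightarrow> rb 4 qx qyp \<Longrightarrow>
  Q4 4 4 qx 4 qy qyp = 0 \<Longrightarrow> Q4 4 1 qx 3 qy qz = 0 \<Longrightarrow> Q4 4 1 qx 1 qyp qz = 0 \<Longrightarrow> Q4 4 3 qy 1 qyp qz = 0 \<Longrightarrow>
  (qx=1\<and>qy=1\<and>qyp=3\<and>qz=1) \<or> (qx=3\<and>qy=1\<and>qyp=1\<and>qz=1)"
  unfolding C3_def by (drule rb4) (elim disjE conjE; simp add: Q4_def)

lemma N4: "C3 rx \<Longrightarrow> C3 ry \<Longrightarrow> C3 ryp \<Longrightarrow> rb 1 rz rq \<Longrightarrow>
  Q4 4 4 rx 4 ry ryp = 0 \<Longrightarrow> Q4 4 1 rx 3 ry rz = 0 \<Longrightarrow> Q4 4 1 rx 1 ry rq = 0 \<Longrightarrow> Q4 4 1 rx 1 ryp rz = 0 \<Longrightarrow>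
  Q4 4 1 rx 3 ryp rq = 0 \<Longrightarrow> Q4 1 1 rx 1 rz rq = 0 \<Longrightarrow> Q4 4 3 ry 1 ryp rz = 0 \<Longrightarrow> Q4 4 1 ry 3 ryp rq = 0 \<Longrightarrow>
  Q4 3 1 ry 1 rz rq = 0 \<Longrightarrow> Q4 1 3 ryp 1 rz rq = 0 \<Longrightarrow> False"
  unfolding C3_def by (drule rb1) (elim disjE conjE; simp add: Q4_def)

lemma C3_num[simp]: "C3 1" "C3 3" "C3 4" by (simp_all add: C3_def)

locale combo =
  fixes S :: "'a set" and col :: "'a \<Rightarrow> 'a \<Rightarrow> real"
  assumes sym: "col u v = col v u"
  and colv: "u\<in>S \<Longrightarrow> v\<in>S \<Longrightarrow> u\<noteq>v \<Longrightarrow> C3 (col u v)"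
  and four: "p0\<in>S \<Longrightarrow> p1\<in>S \<Longrightarrow> p2\<in>S \<Longrightarrow> p3\<in>S \<Longrightarrow> C3 (col p0 p1) \<Longrightarrow> C3 (col p0 p2) \<Longrightarrow> C3 (col p0 p3)
     \<Longrightarrow> C3 (col p1 p2) \<Longrightarrow> C3 (col p1 p3) \<Longrightarrow> C3 (col p2 p3)
     \<Longrightarrow> Q4 (col p0 p1) (col p0 p2) (col p0 p3) (col p1 p2) (col p1 p3) (col p2 p3) = 0"
  and cover: "u\<in>S \<Longrightarrow> v\<in>S \<Longrightarrow> u\<noteq>v \<Longrightarrow> \<exists>z\<in>S. z\<noteq>u \<and> z\<noteq>v \<and> rb (col u v) (col u z) (col v z)"
begin

lemma fin:
  assumes S: "x\<in>S" "y\<in>S" "y'\<in>S" "z\<in>S" "q\<in>S"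
  and c: "col x y = 4" "col x y' = 4" "col y y' = 4" "col x z = 1" "col y z = 3" "col y' z = 1"
         "col x q = 1" "col y q = 1" "col y' q = 3" "col z q = 1"
  shows False
proof -
  have "z \<noteq> q" using c(6) c(9) by auto
  obtain r where r: "r\<in>S" "r\<noteq>z" "r\<noteq>q" "rb (col z q) (col z r) (col q r)"
    using cover[OF S(4) S(5) \<open>z\<noteq>q\<close>] by blast
  have rb': "rb 1 (col z r) (col q r)" using r(4) c(10) by simp
  have cz: "col z x = 1" "col z y = 3" "col z y' = 1" "col q x = 1" "col q y = 1" "col q y' = 3"
    using c sym by metis+
  have "r \<noteq> x" using rb' rb1[of "col z r" "col q r"] cz by auto
  moreover have "r \<noteq> y" using rb' rb1[of "col z r" "col q r"] cz by auto
  moreover have "r \<noteq> y'" using rb' rb1[of "col z r" "col q r"] cz by auto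
  ultimately have Cr: "C3 (col x r)" "C3 (col y r)" "C3 (col y' r)" "C3 (col z r)" "C3 (col q r)"
    using colv S r by metis+
  have e1: "Q4 4 4 (col x r) 4 (col y r) (col y' r) = 0" using four[of x y y' r] S r(1) c Cr by simp
  have e2: "Q4 4 1 (col x r) 3 (col y r) (col z r) = 0" using four[of x y z r] S r(1) c Cr by simp
  have e3: "Q4 4 1 (col x r) 1 (col y r) (col q r) = 0" using four[of x y q r] S r(1) c Cr by simp
  have e4: "Q4 4 1 (col x r) 1 (col y' r) (col z r) = 0" using four[of x y' z r] S r(1) c Cr by simp
  have e5: "Q4 4 1 (col x r) 3 (col y' r) (col q r) = 0" using four[of x y' q r] S r(1) c Cr by simp
  have e6: "Q4 1 1 (col x r) 1 (col z r) (col q r) = 0" using four[of x z q r] S r(1) c Cr by simp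
  have e7: "Q4 4 3 (col y r) 1 (col y' r) (col z r) = 0" using four[of y y' z r] S r(1) c Cr by simp
  have e8: "Q4 4 1 (col y r) 3 (col y' r) (col q r) = 0" using four[of y y' q r] S r(1) c Cr by simp
  have e9: "Q4 3 1 (col y r) 1 (col z r) (col q r) = 0" using four[of y z q r] S r(1) c Cr by simp
  have e10: "Q4 1 3 (col y' r) 1 (col z r) (col q r) = 0" using four[of y' z q r] S r(1) c Cr by simp
  show False using N4[OF Cr(1,2,3) rb' e1 e2 e3 e4 e5 e6 e7 e8 e9 e10] .
qed

lemma equi:
  assumes S: "x\<in>S" "y\<in>S" "y'\<in>S" "z\<in>S" and d: "x \<noteq> y'"
  and c: "col x y = 4" "col x y' = 4" "col y y' = 4" "col x z = 1" "col y z = 3" "col y' z = 1"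
  shows False
proof -
  obtain q where q: "q\<in>S" "q\<noteq>x" "q\<noteq>y'" "rb (col x y') (col x q) (col y' q)"
    using cover[OF S(1) S(3) d] by blast
  have rb': "rb 4 (col x q) (col y' q)" using q(4) c(2) by simp
  have "q \<noteq> y" using rb' rb4[of "col x q" "col y' q"] c by auto
  moreover have "q \<noteq> z" using rb' rb4[of "col x q" "col y' q"] c by auto
  ultimately have Cq: "C3 (col x q)" "C3 (col y q)" "C3 (col y' q)" "C3 (col z q)"
    using colv S q by metis+
  have e1: "Q4 4 4 (col x q) 4 (col y q) (col y' q) = 0" using four[of x y y' q] S q(1) c Cq by simp
  have e2: "Q4 4 1 (col x q) 3 (col y q) (col z q) = 0" using four[of x y z q] S q(1) c Cq by simp
  have e3: "Q4 4 1 (col x q) 1 (col y' q) (col z q) = 0" using four[of x y' z q] S q(1) c Cq by simp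
  have e4: "Q4 4 3 (col y q) 1 (col y' q) (col z q) = 0" using four[of y y' z q] S q(1) c Cq by simp
  from N3[OF Cq(2) Cq(4) rb' e1 e2 e3 e4]
  show False
  proof
    assume h: "col x q = 1 \<and> col y q = 1 \<and> col y' q = 3 \<and> col z q = 1"
    show False using fin[OF S q(1)] c h by simp
  next
    assume h: "col x q = 3 \<and> col y q = 1 \<and> col y' q = 1 \<and> col z q = 1"
    have "col y' y = 4" "col y' x = 4" "col y x = 4" using c sym by metis+
    thus False using fin[OF S(3) S(2) S(1) S(4) q(1)] c h by simp
  qed
qed

lemma main:
  assumes S: "x\<in>S" "y\<in>S" "y'\<in>S" and d: "x \<noteq> y" "x \<noteq> y'" "y \<noteq> y'"
  and c: "col x y = 4" "col x y' = 4"
  shows False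
proof -
  obtain z where z: "z\<in>S" "z\<noteq>x" "z\<noteq>y" "rb (col x y) (col x z) (col y z)"
    using cover[OF S(1) S(2) d(1)] by blast
  have rb': "rb 4 (col x z) (col y z)" using z(4) c(1) by simp
  have "z \<noteq> y'" using rb' rb4[of "col x z" "col y z"] c by auto
  hence Cz: "C3 (col x z)" "C3 (col y z)" "C3 (col y' z)" using colv S z by metis+
  have Cyy: "C3 (col y y')" using colv S d by metis
  have e: "Q4 4 4 (col x z) (col y y') (col y z) (col y' z) = 0"
    using four[of x y y' z] S z(1) c Cz Cyy by simp
  have "col y y' = 4"
  proof (rule ccontr)
    assume "col y y' \<noteq> 4"
    hence "col y y' = 1 \<or> col y y' = 3" using Cyy unfolding C3_def by auto
    thus False using N1[OF Cz(3) rb' e] by blast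
  qed
  hence e': "Q4 4 4 (col x z) 4 (col y z) (col y' z) = 0" using e by simp
  from N2[OF Cz(3) rb' e']
  show False
  proof
    assume h: "col x z = 1 \<and> col y z = 3 \<and> col y' z = 1"
    show False using equi[OF S z(1) d(2)] c h \<open>col y y' = 4\<close> by simp
  next
    assume h: "col x z = 3 \<and> col y z = 1 \<and> col y' z = 1"
    have "col y x = 4" using c sym by metis
    thus False using equi[OF S(2) S(1) S(3) z(1) d(3)] c h \<open>col y y' = 4\<close> by simp
  qed
qed

end


lemma merge_term:
  fixes w :: "'a \<Rightarrow> real"
  assumes fe: "finite e" and uv: "u \<noteq> v" and zero: "u\<in>e \<Longrightarrow> v\<in>e \<Longrightarrow> prod w e = 0"
  shows "prod (w(u := w u + w v, v := 0)) e = prod w e + w v * ((if u\<in>e \<and> v\<notin>e then prod w (e - {u}) else 0) - (if v\<in>e \<and> u\<notin>e then prod w (e - {v}) else 0))"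
proof -
  let ?w' = "w(u := w u + w v, v := 0)"
  consider (a) "u\<in>e" "v\<notin>e" | (b) "v\<in>e" "u\<notin>e" | (c) "u\<in>e" "v\<in>e" | (d) "u\<notin>e" "v\<notin>e" by blast
  thus ?thesis
  proof cases
    case a
    have "prod ?w' e = ?w' u * prod ?w' (e - {u})" using fe a by (simp add: prod.remove)
    also have "prod ?w' (e - {u}) = prod w (e - {u})" using a by (intro prod.cong) auto
    also have "?w' u = w u + w v" using uv by simp
    finally have 1: "prod ?w' e = (w u + w v) * prod w (e - {u})" .
    have 2: "prod w e = w u * prod w (e - {u})" using fe a by (simp add: prod.remove)
    show ?thesis using 1 2 a by (simp add: algebra_simps)
  next
    case b
    have 1: "prod ?w' e = 0" using fe b by (metis fun_upd_same prod_zero_iff)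
    have 2: "prod w e = w v * prod w (e - {v})" using fe b by (simp add: prod.remove)
    show ?thesis using 1 2 b by (simp add: algebra_simps)
  next
    case c
    have 1: "prod ?w' e = 0" using fe c by (metis fun_upd_same prod_zero_iff)
    show ?thesis using 1 zero c by simp
  next
    case d
    have "prod ?w' e = prod w e" using d by (intro prod.cong) auto
    thus ?thesis using d by simp
  qed
qed

lemma merge_ge:
  fixes w :: "'a \<Rightarrow> real"
  assumes fE: "finite E" and fe: "\<And>e. e\<in>E \<Longrightarrow> finite e" and uv: "u \<noteq> v"
    and zero: "\<And>e. e\<in>E \<Longrightarrow> u\<in>e \<Longrightarrow> v\<in>e \<Longrightarrow> prod w e = 0"
    and A: "(\<Sum>e\<in>E. if v\<in>e \<and> u\<notin>e then prod w (e - {v}) else 0) \<le> (\<Sum>e\<in>E. if u\<in>e \<and> v\<notin>e then prod w (e - {u}) else 0)"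
    and wv: "w v \<ge> 0"
  shows "(\<Sum>e\<in>E. prod w e) \<le> (\<Sum>e\<in>E. prod (w(u := w u + w v, v := 0)) e)"
proof -
  let ?A = "\<lambda>e. (if u\<in>e \<and> v\<notin>e then prod w (e - {u}) else 0)"
  let ?B = "\<lambda>e. (if v\<in>e \<and> u\<notin>e then prod w (e - {v}) else 0)"
  have "(\<Sum>e\<in>E. prod (w(u := w u + w v, v := 0)) e) = (\<Sum>e\<in>E. prod w e + w v * (?A e - ?B e))"
    by (rule sum.cong[OF refl], rule merge_term[OF fe uv zero]) auto
  also have "\<dots> = (\<Sum>e\<in>E. prod w e) + w v * ((\<Sum>e\<in>E. ?A e) - (\<Sum>e\<in>E. ?B e))"
    by (simp add: sum.distrib sum_distrib_left sum_subtractf right_diff_distrib)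
  finally show ?thesis using A wv by (simp add: mult_nonneg_nonneg)
qed

lemma ineq_pair:
  fixes a b s :: real
  assumes "a \<ge> 0" "b \<ge> 0" "a + b \<le> s"
  shows "a * b * (s - a - b) \<le> (a + b) * s^2 / 16"
proof -
  have 1: "a * b \<le> (a+b)^2/4" using sum_squares_ge_zero[of "a-b" 0] by (simp add: power2_eq_square algebra_simps)
  have 2: "(a+b) * (s - (a+b)) \<le> s^2/4" using sum_squares_ge_zero[of "s - 2*(a+b)" 0] by (simp add: power2_eq_square algebra_simps)
  have s0: "s - a - b \<ge> 0" using assms by simp
  have "a * b * (s - a - b) \<le> (a+b)^2/4 * (s - a - b)" using mult_right_mono[OF 1 s0] .
  also have "\<dots> = (a+b)/4 * ((a+b) * (s - (a+b)))" by (simp add: power2_eq_square field_simps)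
  also have "\<dots> \<le> (a+b)/4 * (s^2/4)" using 2 assms by (intro mult_left_mono) auto
  finally show ?thesis by simp
qed

lemma sum_edges_pair:
  fixes w :: "'a \<Rightarrow> real"
  assumes fV: "finite V" and E3: "\<And>e. e\<in>E \<Longrightarrow> e \<subseteq> V \<and> card e = 3" and w0: "\<And>v. v\<in>V \<Longrightarrow> w v \<ge> 0"
    and x: "x\<in>V" and y: "y\<in>V" and xy: "x\<noteq>y"
  shows "(\<Sum>e\<in>E. if x\<in>e \<and> y\<in>e then prod w e else 0) \<le> w x * w y * (sum w V - w x - w y)"
proof -
  have fE: "finite E" using E3 fV by (meson finite_Pow_iff finite_subset subsetI PowI)
  let ?F = "{e\<in>E. x\<in>e \<and> y\<in>e}"
  let ?g = "\<lambda>z. {x,y,z}"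
  have "(\<Sum>e\<in>E. if x\<in>e \<and> y\<in>e then prod w e else 0) = (\<Sum>e\<in>?F. prod w e)"
    using fE by (simp add: sum.inter_filter)
  also have "\<dots> \<le> (\<Sum>e\<in>?g ` (V - {x,y}). prod w e)"
  proof (rule sum_mono2)
    show "finite (?g ` (V - {x,y}))" using fV by simp
    show "?F \<subseteq> ?g ` (V - {x,y})"
    proof
      fix e assume e: "e \<in> ?F"
      hence eV: "e \<subseteq> V" and c3: "card e = 3" and xe: "x\<in>e" and ye: "y\<in>e" using E3 by auto
      have "card (e - {x,y}) = 1" using c3 xe ye xy by (simp add: card_Diff_subset)
      then obtain z where z: "e - {x,y} = {z}" by (auto simp: card_Suc_eq)
      hence "e = {x,y,z}" using xe ye by auto
      moreover have "z \<in> V - {x,y}" using z eV by auto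
      ultimately show "e \<in> ?g ` (V - {x,y})" by blast
    qed
    show "\<And>e. e \<in> ?g ` (V - {x,y}) - ?F \<Longrightarrow> 0 \<le> prod w e"
      using w0 x y by (auto intro!: prod_nonneg)
  qed
  also have "\<dots> = (\<Sum>z\<in>V - {x,y}. prod w {x,y,z})"
  proof -
    have "inj_on ?g (V - {x,y})"
    proof (rule inj_onI)
      fix z z' assume h: "z \<in> V - {x,y}" "z' \<in> V - {x,y}" "{x,y,z} = {x,y,z'}"
      hence "z \<in> {x,y,z'}" by blast
      thus "z = z'" using h(1) by auto
    qed
    thus ?thesis by (simp add: sum.reindex)
  qed
  also have "\<dots> = (\<Sum>z\<in>V - {x,y}. w x * w y * w z)"
    using xy by (intro sum.cong) auto
  also have "\<dots> = w x * w y * (\<Sum>z\<in>V - {x,y}. w z)" by (simp add: sum_distrib_left)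
  also have "(\<Sum>z\<in>V - {x,y}. w z) = sum w V - w x - w y"
    using fV x y xy by (simp add: sum_diff)
  finally show ?thesis by simp
qed

lemma base_bound:
  fixes w :: "'a \<Rightarrow> real" and hyp :: "'a \<Rightarrow> 'a \<Rightarrow> bool"
  assumes fV: "finite V" and E3: "\<And>e. e\<in>E \<Longrightarrow> e \<subseteq> V \<and> card e = 3" and w0: "\<And>v. v\<in>V \<Longrightarrow> w v \<ge> 0"
    and hsym: "\<And>x y. hyp x y \<Longrightarrow> hyp y x"
    and hedge: "\<And>e. e\<in>E \<Longrightarrow> \<exists>x\<in>e. \<exists>y\<in>e. x\<noteq>y \<and> hyp x y"
    and mS: "\<And>x y y'. x\<in>V \<Longrightarrow> y\<in>V \<Longrightarrow> y'\<in>V \<Longrightarrow> w x \<noteq> 0 \<Longrightarrow> w y \<noteq> 0 \<Longrightarrow> w y' \<noteq> 0 \<Longrightarrow>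
                 x\<noteq>y \<Longrightarrow> x\<noteq>y' \<Longrightarrow> hyp x y \<Longrightarrow> hyp x y' \<Longrightarrow> y = y'"
  shows "(\<Sum>e\<in>E. prod w e) \<le> (sum w V)^3/16"
proof -
  have fE: "finite E" using E3 fV by (meson finite_Pow_iff finite_subset subsetI PowI)
  define S where "S = {v\<in>V. w v \<noteq> 0}"
  define s where "s = sum w V"
  define M where "M = {p. fst p \<in> S \<and> snd p \<in> S \<and> fst p \<noteq> snd p \<and> hyp (fst p) (snd p)}"
  define f where "f = (\<lambda>e p. if fst p \<in> e \<and> snd p \<in> e then prod w e else (0::real))"
  have SV: "S \<subseteq> V" unfolding S_def by auto
  have fM: "finite M"
  proof -
    have "M \<subseteq> S \<times> S" unfolding M_def by auto
    moreover have "finite (S \<times> S)" using fV SV by (auto intro: finite_subset)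
    ultimately show ?thesis by (rule finite_subset)
  qed
  have pe0: "\<And>e. e\<in>E \<Longrightarrow> prod w e \<ge> 0" using E3 w0 by (meson prod_nonneg subsetD)
  have f0: "\<And>e p. e\<in>E \<Longrightarrow> f e p \<ge> 0" unfolding f_def using pe0 by auto
  have s0: "s \<ge> 0" unfolding s_def using w0 by (simp add: sum_nonneg)
  have step1: "prod w e \<le> (1/2) * (\<Sum>p\<in>M. f e p)" if e: "e\<in>E" for e
  proof (cases "prod w e = 0")
    case True
    thus ?thesis using f0[OF e] by (simp add: sum_nonneg)
  next
    case False
    have eS: "e \<subseteq> S"
    proof
      fix v assume v: "v\<in>e"
      have "w v \<noteq> 0" using False v E3[OF e] by (metis prod_zero_iff card.infinite zero_neq_numeral)
      thus "v \<in> S" using v E3[OF e] S_def by auto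
    qed
    obtain x y where xy: "x\<in>e" "y\<in>e" "x\<noteq>y" "hyp x y" using hedge[OF e] by blast
    have sub: "{(x,y),(y,x)} \<subseteq> M" using xy eS hsym unfolding M_def by auto
    have "(\<Sum>p\<in>{(x,y),(y,x)}. f e p) \<le> (\<Sum>p\<in>M. f e p)"
      by (rule sum_mono2[OF fM sub]) (use f0[OF e] in auto)
    moreover have "(\<Sum>p\<in>{(x,y),(y,x)}. f e p) = 2 * prod w e" using xy unfolding f_def by simp
    ultimately show ?thesis by simp
  qed
  have "(\<Sum>e\<in>E. prod w e) \<le> (\<Sum>e\<in>E. (1/2) * (\<Sum>p\<in>M. f e p))" by (rule sum_mono) (rule step1)
  also have "\<dots> = (1/2) * (\<Sum>e\<in>E. \<Sum>p\<in>M. f e p)" by (rule sum_distrib_left[symmetric])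
  also have "\<dots> = (1/2) * (\<Sum>p\<in>M. \<Sum>e\<in>E. f e p)" by (subst sum.swap) (rule refl)
  also have "\<dots> \<le> (1/2) * (\<Sum>p\<in>M. (w (fst p) + w (snd p)) * s^2/16)"
  proof -
    have "(\<Sum>e\<in>E. f e p) \<le> (w (fst p) + w (snd p)) * s^2/16" if p: "p\<in>M" for p
    proof -
      have x: "fst p \<in> V" "snd p \<in> V" "fst p \<noteq> snd p" using p SV unfolding M_def by auto
      have "(\<Sum>e\<in>E. f e p) \<le> w (fst p) * w (snd p) * (s - w (fst p) - w (snd p))"
        unfolding f_def s_def by (rule sum_edges_pair[OF fV E3 w0 x])
      also have "\<dots> \<le> (w (fst p) + w (snd p)) * s^2/16"
      proof (rule ineq_pair)
        show "w (fst p) \<ge> 0" "w (snd p) \<ge> 0" using w0 x by auto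
        have "sum w {fst p, snd p} \<le> sum w V" using x fV w0 by (intro sum_mono2) auto
        thus "w (fst p) + w (snd p) \<le> s" using x unfolding s_def by simp
      qed
      finally show ?thesis .
    qed
    thus ?thesis by (intro mult_left_mono sum_mono) auto
  qed
  also have "\<dots> = (1/2) * (s^2/16) * ((\<Sum>p\<in>M. w (fst p)) + (\<Sum>p\<in>M. w (snd p)))"
  proof -
    have "(\<Sum>p\<in>M. (w (fst p) + w (snd p)) * s^2/16) = (\<Sum>p\<in>M. (s^2/16) * (w (fst p) + w (snd p)))"
      by (rule sum.cong) auto
    also have "\<dots> = (s^2/16) * (\<Sum>p\<in>M. (w (fst p) + w (snd p)))" by (rule sum_distrib_left[symmetric])
    also have "\<dots> = (s^2/16) * ((\<Sum>p\<in>M. w (fst p)) + (\<Sum>p\<in>M. w (snd p)))" by (simp add: sum.distrib)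
    finally show ?thesis by simp
  qed
  also have "\<dots> \<le> (1/2) * (s^2/16) * (s + s)"
  proof -
    have i1: "inj_on fst M"
    proof (rule inj_onI)
      fix p q assume h: "p\<in>M" "q\<in>M" "fst p = fst q"
      have "snd p = snd q" using mS[of "fst p" "snd p" "snd q"] h unfolding M_def S_def by auto
      thus "p = q" using h(3) by (simp add: prod_eq_iff)
    qed
    have i2: "inj_on snd M"
    proof (rule inj_onI)
      fix p q assume h: "p\<in>M" "q\<in>M" "snd p = snd q"
      have "fst p = fst q" using mS[of "snd p" "fst p" "fst q"] h hsym unfolding M_def S_def by auto
      thus "p = q" using h(3) by (simp add: prod_eq_iff)
    qed
    have "(\<Sum>p\<in>M. w (fst p)) = (\<Sum>x\<in>fst ` M. w x)" using i1 by (simp add: sum.reindex)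
    also have "\<dots> \<le> s" unfolding s_def using fV w0 SV by (intro sum_mono2) (auto simp: M_def)
    finally have 1: "(\<Sum>p\<in>M. w (fst p)) \<le> s" .
    have "(\<Sum>p\<in>M. w (snd p)) = (\<Sum>x\<in>snd ` M. w x)" using i2 by (simp add: sum.reindex)
    also have "\<dots> \<le> s" unfolding s_def using fV w0 SV by (intro sum_mono2) (auto simp: M_def)
    finally have 2: "(\<Sum>p\<in>M. w (snd p)) \<le> s" .
    show ?thesis using 1 2 by (intro mult_left_mono) auto
  qed
  also have "\<dots> = s^3/16" by (simp add: power2_eq_square power3_eq_cube)
  finally show ?thesis unfolding s_def .
qed

lemma sum_upd2:
  fixes w :: "'a \<Rightarrow> real"
  assumes "finite V" "u\<in>V" "v\<in>V" "u\<noteq>v"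
  shows "sum (w(u := a, v := b)) V = sum w V - w u - w v + a + b"
proof -
  have 1: "sum g V = g u + g v + sum g (V - {u,v})" for g :: "'a \<Rightarrow> real"
  proof -
    have "sum g V = g u + sum g (V - {u})" using assms by (simp add: sum.remove)
    also have "sum g (V - {u}) = g v + sum g (V - {u} - {v})" using assms by (simp add: sum.remove)
    finally show ?thesis by (simp add: Diff_insert2[symmetric] add.assoc)
  qed
  have "sum (w(u := a, v := b)) (V - {u,v}) = sum w (V - {u,v})" by (rule sum.cong) auto
  thus ?thesis using 1[of "w(u := a, v := b)"] 1[of w] assms by simp
qed

lemma edge_third:
  assumes "card e = 3" "u\<in>e" "v\<in>e" "u\<noteq>v"
  obtains z where "e = {u,v,z}" "z\<noteq>u" "z\<noteq>v"
proof -
  have "card (e - {u,v}) = 1" using assms by (simp add: card_Diff_subset)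
  then obtain z where z: "e - {u,v} = {z}" by (auto simp: card_Suc_eq)
  hence "e = {u,v,z}" "z\<noteq>u" "z\<noteq>v" using assms by auto
  thus ?thesis using that by blast
qed

lemma lagr:
  fixes hyp :: "'a \<Rightarrow> 'a \<Rightarrow> bool" and V :: "'a set" and E :: "'a set set"
  assumes fV: "finite V" and E3: "\<And>e. e\<in>E \<Longrightarrow> e \<subseteq> V \<and> card e = 3"
    and hsym: "\<And>x y. hyp x y \<Longrightarrow> hyp y x"
    and hedge: "\<And>e. e\<in>E \<Longrightarrow> \<exists>x\<in>e. \<exists>y\<in>e. x\<noteq>y \<and> hyp x y"
    and match: "\<And>S x y y'. S \<subseteq> V \<Longrightarrow> (\<forall>u\<in>S. \<forall>v\<in>S. u\<noteq>v \<longrightarrow> (\<exists>z\<in>S. {u,v,z}\<in>E)) \<Longrightarrow>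
        x\<in>S \<Longrightarrow> y\<in>S \<Longrightarrow> y'\<in>S \<Longrightarrow> x\<noteq>y \<Longrightarrow> x\<noteq>y' \<Longrightarrow> hyp x y \<Longrightarrow> hyp x y' \<Longrightarrow> y = y'"
  shows "(\<forall>v\<in>V. w v \<ge> (0::real)) \<Longrightarrow> (\<Sum>e\<in>E. prod w e) \<le> (sum w V)^3/16"
proof (induction "card {v\<in>V. w v \<noteq> 0}" arbitrary: w rule: less_induct)
  case less
  have fE: "finite E" using E3 fV by (meson finite_Pow_iff finite_subset subsetI PowI)
  have fe: "\<And>e. e\<in>E \<Longrightarrow> finite e" using E3 fV by (meson finite_subset)
  define S where "S = {v\<in>V. w v \<noteq> 0}"
  have fS: "finite S" using fV S_def by simp
  show ?case
  proof (cases "\<forall>u\<in>S. \<forall>v\<in>S. u\<noteq>v \<longrightarrow> (\<exists>z\<in>S. {u,v,z}\<in>E)")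
    case True
    show ?thesis
    proof (rule base_bound[OF fV E3, where w=w and hyp=hyp])
      show "\<And>v. v\<in>V \<Longrightarrow> 0 \<le> w v" using less.prems by auto
      show "\<And>x y. hyp x y \<Longrightarrow> hyp y x" by (rule hsym)
      show "\<And>e. e\<in>E \<Longrightarrow> \<exists>x\<in>e. \<exists>y\<in>e. x\<noteq>y \<and> hyp x y" by (rule hedge)
      fix x y y' assume h: "x\<in>V" "y\<in>V" "y'\<in>V" "w x \<noteq> 0" "w y \<noteq> 0" "w y' \<noteq> 0"
        "x\<noteq>y" "x\<noteq>y'" "hyp x y" "hyp x y'"
      show "y = y'" using match[of S x y y'] True h unfolding S_def by auto
    qed
  next
    case False
    then obtain u v where uv: "u\<in>S" "v\<in>S" "u\<noteq>v" and nz: "\<forall>z\<in>S. {u,v,z}\<notin>E" by blast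
    have key: "(\<Sum>e\<in>E. prod w e) \<le> (sum w V)^3/16"
      if ab: "a\<in>S" "b\<in>S" "a\<noteq>b" and zero: "\<And>e. e\<in>E \<Longrightarrow> a\<in>e \<Longrightarrow> b\<in>e \<Longrightarrow> prod w e = 0"
      and A: "(\<Sum>e\<in>E. if b\<in>e \<and> a\<notin>e then prod w (e - {b}) else 0) \<le> (\<Sum>e\<in>E. if a\<in>e \<and> b\<notin>e then prod w (e - {a}) else 0)"
      for a b
    proof -
      define w' where "w' = w(a := w a + w b, b := 0)"
      have aV: "a\<in>V" "b\<in>V" using ab S_def by auto
      have w0: "w b \<ge> 0" "w a \<ge> 0" using less.prems aV by auto
      have 1: "(\<Sum>e\<in>E. prod w e) \<le> (\<Sum>e\<in>E. prod w' e)"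
        unfolding w'_def by (rule merge_ge[OF fE fe ab(3) zero A w0(1)])
      have sub: "{x\<in>V. w' x \<noteq> 0} \<subseteq> S - {b}" using ab unfolding w'_def S_def by auto
      have "card {x\<in>V. w' x \<noteq> 0} < card {v\<in>V. w v \<noteq> 0}"
      proof -
        have "card {x\<in>V. w' x \<noteq> 0} \<le> card (S - {b})" using sub fS by (intro card_mono) auto
        also have "\<dots> < card S" using fS ab by (intro psubset_card_mono) auto
        finally show ?thesis unfolding S_def .
      qed
      moreover have "\<forall>x\<in>V. w' x \<ge> 0" using less.prems w0 unfolding w'_def by auto
      ultimately have 2: "(\<Sum>e\<in>E. prod w' e) \<le> (sum w' V)^3/16" using less.hyps by blast
      have "sum w' V = sum w V" unfolding w'_def using sum_upd2[OF fV aV ab(3)] by simp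
      thus ?thesis using 1 2 by simp
    qed
    have zero: "prod w e = 0" if e: "e\<in>E" "u\<in>e" "v\<in>e" for e
    proof -
      obtain z where z: "e = {u,v,z}" "z\<noteq>u" "z\<noteq>v" using edge_third[of e u v] E3 e uv(3) by blast
      have "z \<notin> S" using nz z e(1) by auto
      moreover have "z \<in> V" using E3[OF e(1)] z by auto
      ultimately have "w z = 0" unfolding S_def by auto
      thus ?thesis using z fe[OF e(1)] by (metis insertCI prod_zero_iff)
    qed
    show ?thesis
    proof (cases "(\<Sum>e\<in>E. if v\<in>e \<and> u\<notin>e then prod w (e - {v}) else 0) \<le> (\<Sum>e\<in>E. if u\<in>e \<and> v\<notin>e then prod w (e - {u}) else 0)")
      case True
      show ?thesis by (rule key[OF uv(1) uv(2) uv(3) zero True]) auto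
    next
      case False
      show ?thesis by (rule key[OF uv(2) uv(1) uv(3)[symmetric]]) (use zero False in auto)
    qed
  qed
qed


lemma dist_sq2: "(dist (p::real^2) q)^2 = (p$1 - q$1)^2 + (p$2 - q$2)^2"
  by (simp add: dist_vec_def L2_set_def sum_2 dist_real_def power2_abs)

lemma gram0:
  fixes p0 p1 p2 p3 :: "real^2"
  shows "Q4 ((dist p0 p1)^2) ((dist p0 p2)^2) ((dist p0 p3)^2) ((dist p1 p2)^2) ((dist p1 p3)^2) ((dist p2 p3)^2) = 0"
  unfolding dist_sq2 Q4_def by algebra

definition mons :: "(real \<times> nat \<times> nat \<times> nat) list" where
  "mons = [(-1,3,4,5), (1,2,3,5), (1,2,3,4), (-1,2,3,3), (-1,2,2,3), (1,1,4,5), (-1,1,4,4), (1,1,3,4), (-1,1,2,5), (1,1,2,4), (1,1,2,3), (-1,1,1,4), (-1,0,5,5), (1,0,4,5), (1,0,3,5), (1,0,2,5), (-1,0,2,4), (1,0,2,3), (1,0,1,5), (1,0,1,4), (-1,0,1,3), (-1,0,0,5)]"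

definition Ql :: "(nat \<Rightarrow> real) \<Rightarrow> real" where
  "Ql r = (\<Sum>t\<leftarrow>mons. case t of (s,i,j,k) \<Rightarrow> s * r i * r j * r k)"

lemma Q4_Ql: "Q4 a b c d e f = Ql (\<lambda>n. [a,b,c,d,e,f] ! n)"
  by (simp add: Q4_def Ql_def mons_def algebra_simps)

lemma mono3:
  fixes x y z a b c e :: real
  assumes h: "\<bar>x-a\<bar> \<le> e" "\<bar>y-b\<bar> \<le> e" "\<bar>z-c\<bar> \<le> e" "\<bar>a\<bar> \<le> 4" "\<bar>b\<bar> \<le> 4" "\<bar>c\<bar> \<le> 4" "e \<le> 1"
  shows "\<bar>x*y*z - a*b*c\<bar> \<le> 61*e"
proof -
  have e0: "e \<ge> 0" using h(1) by linarith
  have y5: "\<bar>y\<bar> \<le> 5" using h by linarith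
  have z5: "\<bar>z\<bar> \<le> 5" using h by linarith
  have id: "x*y*z - a*b*c = (x-a)*(y*z) + a*((y-b)*z) + (a*b)*(z-c)" by (simp add: algebra_simps)
  have yz: "\<bar>y\<bar>*\<bar>z\<bar> \<le> 5*5" by (rule mult_mono[OF y5 z5]) auto
  have t1: "\<bar>x-a\<bar>*(\<bar>y\<bar>*\<bar>z\<bar>) \<le> e*(5*5)" by (rule mult_mono[OF h(1) yz]) (auto simp: e0)
  have bz: "\<bar>y-b\<bar>*\<bar>z\<bar> \<le> e*5" by (rule mult_mono[OF h(2) z5]) (auto simp: e0)
  have t2: "\<bar>a\<bar>*(\<bar>y-b\<bar>*\<bar>z\<bar>) \<le> 4*(e*5)" by (rule mult_mono[OF h(4) bz]) (auto simp: e0)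
  have ab: "\<bar>a\<bar>*\<bar>b\<bar> \<le> 4*4" by (rule mult_mono[OF h(4) h(5)]) auto
  have t3: "(\<bar>a\<bar>*\<bar>b\<bar>)*\<bar>z-c\<bar> \<le> (4*4)*e" by (rule mult_mono[OF ab h(3)]) auto
  have "\<bar>x*y*z - a*b*c\<bar> \<le> \<bar>(x-a)*(y*z)\<bar> + \<bar>a*((y-b)*z)\<bar> + \<bar>(a*b)*(z-c)\<bar>"
    unfolding id using abs_triangle_ineq[of "(x-a)*(y*z) + a*((y-b)*z)" "(a*b)*(z-c)"]
      abs_triangle_ineq[of "(x-a)*(y*z)" "a*((y-b)*z)"] by linarith
  also have "\<dots> = \<bar>x-a\<bar>*(\<bar>y\<bar>*\<bar>z\<bar>) + \<bar>a\<bar>*(\<bar>y-b\<bar>*\<bar>z\<bar>) + (\<bar>a\<bar>*\<bar>b\<bar>)*\<bar>z-c\<bar>" by (simp add: abs_mult)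
  also have "\<dots> \<le> 61*e" using t1 t2 t3 by linarith
  finally show ?thesis .
qed

lemma mons_prop: "\<forall>t\<in>set mons. case t of (s,i,j,k) \<Rightarrow> \<bar>s\<bar> = 1 \<and> i < 6 \<and> j < 6 \<and> k < 6"
  by (simp add: mons_def)

lemma Ql_bound:
  assumes r: "\<And>i. i < 6 \<Longrightarrow> \<bar>r i - c i\<bar> \<le> e" and c: "\<And>i. i < 6 \<Longrightarrow> \<bar>c i\<bar> \<le> 4" and e1: "e \<le> 1"
  shows "\<bar>Ql r - Ql c\<bar> \<le> 1342 * e"
proof -
  define F where "F = (\<lambda>t. case t of (s::real,i::nat,j::nat,k::nat) \<Rightarrow> s * (r i * r j * r k - c i * c j * c k))"
  have "Ql r - Ql c = (\<Sum>t\<leftarrow>mons. F t)"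
    unfolding Ql_def F_def sum_list_subtractf[symmetric]
    by (rule arg_cong[where f=sum_list], rule map_cong[OF refl]) (auto simp: algebra_simps)
  also have "\<bar>\<dots>\<bar> \<le> (\<Sum>t\<leftarrow>mons. \<bar>F t\<bar>)" using sum_list_abs[of "map F mons"] by (simp add: comp_def)
  also have "\<dots> \<le> (\<Sum>t\<leftarrow>mons. 61 * e)"
  proof (rule sum_list_mono)
    fix t assume t: "t \<in> set mons"
    obtain s i j k where tt: "t = (s,i,j,k)" by (cases t) auto
    have p: "\<bar>s\<bar> = 1" "i < 6" "j < 6" "k < 6" using mons_prop t tt by auto
    have "\<bar>r i * r j * r k - c i * c j * c k\<bar> \<le> 61 * e"
      by (rule mono3) (use r c e1 p in auto)
    thus "\<bar>F t\<bar> \<le> 61 * e" unfolding F_def tt using p by (simp add: abs_mult)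
  qed
  also have "\<dots> = 1342 * e" by (simp add: sum_list_triv mons_def)
  finally show ?thesis .
qed

lemma Q4_scale: "Q4 (a*t) (b*t) (c*t) (d*t) (e*t) (f*t) = t^3 * Q4 a b c d e f"
  by (simp add: Q4_def algebra_simps power3_eq_cube)

lemma C3_Ints: "C3 a \<Longrightarrow> a \<in> \<int>" unfolding C3_def by auto

lemma Q4_Ints: "a \<in> \<int> \<Longrightarrow> b \<in> \<int> \<Longrightarrow> c \<in> \<int> \<Longrightarrow> d \<in> \<int> \<Longrightarrow> e \<in> \<int> \<Longrightarrow> f \<in> \<int> \<Longrightarrow> Q4 a b c d e f \<in> \<int>"
  unfolding Q4_def by (intro Ints_diff Ints_add Ints_mult Ints_minus) auto

lemma four_geo:
  fixes p0 p1 p2 p3 :: "real^2" and L e :: real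
  assumes L: "L > 0" and e: "e \<le> 1/2000"
    and C: "C3 a" "C3 b" "C3 c" "C3 d" "C3 f" "C3 g"
    and h: "\<bar>(dist p0 p1)^2 - a*L^2\<bar> \<le> e*L^2" "\<bar>(dist p0 p2)^2 - b*L^2\<bar> \<le> e*L^2"
           "\<bar>(dist p0 p3)^2 - c*L^2\<bar> \<le> e*L^2" "\<bar>(dist p1 p2)^2 - d*L^2\<bar> \<le> e*L^2"
           "\<bar>(dist p1 p3)^2 - f*L^2\<bar> \<le> e*L^2" "\<bar>(dist p2 p3)^2 - g*L^2\<bar> \<le> e*L^2"
  shows "Q4 a b c d f g = 0"
proof -
  define t where "t = 1/L^2"
  have t0: "t > 0" using L t_def by simp
  define r where "r = (\<lambda>n. [(dist p0 p1)^2*t, (dist p0 p2)^2*t, (dist p0 p3)^2*t, (dist p1 p2)^2*t, (dist p1 p3)^2*t, (dist p2 p3)^2*t] ! n)"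
  define cc where "cc = (\<lambda>n. [a,b,c,d,f,g] ! n)"
  have sc: "\<bar>x*t - y\<bar> \<le> e" if "\<bar>x - y*L^2\<bar> \<le> e*L^2" for x y
  proof -
    have "x*t - y = (x - y*L^2)*t" using L t_def by (simp add: field_simps)
    hence "\<bar>x*t - y\<bar> = \<bar>x - y*L^2\<bar> * t" using t0 by (simp add: abs_mult)
    also have "\<dots> \<le> e*L^2*t" using that t0 by (simp add: mult_right_mono)
    also have "\<dots> = e" using L t_def by simp
    finally show ?thesis .
  qed
  have r0: "\<bar>r 0 - cc 0\<bar> \<le> e" unfolding r_def cc_def using sc[OF h(1)] by simp
  have r1: "\<bar>r 1 - cc 1\<bar> \<le> e" unfolding r_def cc_def using sc[OF h(2)] by simp
  have r2: "\<bar>r 2 - cc 2\<bar> \<le> e" unfolding r_def cc_def using sc[OF h(3)] by simp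
  have r3: "\<bar>r 3 - cc 3\<bar> \<le> e" unfolding r_def cc_def using sc[OF h(4)] by simp
  have r4: "\<bar>r 4 - cc 4\<bar> \<le> e" unfolding r_def cc_def using sc[OF h(5)] by simp
  have r5: "\<bar>r 5 - cc 5\<bar> \<le> e" unfolding r_def cc_def using sc[OF h(6)] by simp
  have ri: "\<bar>r i - cc i\<bar> \<le> e" if "i < 6" for i
  proof -
    have "i = 0 \<or> i = 1 \<or> i = 2 \<or> i = 3 \<or> i = 4 \<or> i = 5" using that by auto
    thus ?thesis using r0 r1 r2 r3 r4 r5 by (elim disjE) simp_all
  qed
  have ci: "\<bar>cc i\<bar> \<le> 4" if "i < 6" for i
  proof -
    have "i = 0 \<or> i = 1 \<or> i = 2 \<or> i = 3 \<or> i = 4 \<or> i = 5" using that by auto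
    moreover have c4: "\<And>x. C3 x \<Longrightarrow> \<bar>x\<bar> \<le> 4" unfolding C3_def by auto
    ultimately show ?thesis unfolding cc_def using c4[OF C(1)] c4[OF C(2)] c4[OF C(3)] c4[OF C(4)] c4[OF C(5)] c4[OF C(6)]
      by (elim disjE) simp_all
  qed
  have "\<bar>Ql r - Ql cc\<bar> \<le> 1342 * e" by (rule Ql_bound[OF ri ci]) (use e in auto)
  moreover have "Ql r = 0"
  proof -
    have "Ql r = Q4 ((dist p0 p1)^2*t) ((dist p0 p2)^2*t) ((dist p0 p3)^2*t) ((dist p1 p2)^2*t) ((dist p1 p3)^2*t) ((dist p2 p3)^2*t)"
      unfolding r_def Q4_Ql by (rule refl)
    also have "\<dots> = 0" unfolding Q4_scale gram0 by simp
    finally show ?thesis .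
  qed
  moreover have "Ql cc = Q4 a b c d f g" unfolding cc_def Q4_Ql by (rule refl)
  ultimately have "\<bar>Q4 a b c d f g\<bar> < 1" using e by simp
  moreover have "Q4 a b c d f g \<in> \<int>" using C by (intro Q4_Ints C3_Ints)
  ultimately show ?thesis using Ints_nonzero_abs_less1 by blast
qed


definition colf :: "real \<Rightarrow> pt \<Rightarrow> pt \<Rightarrow> real" where
  "colf L p q = (if \<bar>(dist p q)^2 - L^2\<bar> \<le> L^2/10000 then 1
     else if \<bar>(dist p q)^2 - 3*L^2\<bar> \<le> L^2/10000 then 3
     else if \<bar>(dist p q)^2 - 4*L^2\<bar> \<le> L^2/10000 then 4 else 0)"

lemma colf_sym: "colf L p q = colf L q p"
  unfolding colf_def by (simp add: dist_commute)

lemma colf_val: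
  assumes L: "L > 0" and k: "C3 k" and h: "\<bar>(dist p q)^2 - k*L^2\<bar> \<le> L^2/10000"
  shows "colf L p q = k"
proof -
  define X where "X = (dist p q)^2"
  define d where "d = L^2/10000"
  have d: "d > 0" "L^2 = 10000*d" unfolding d_def using L by simp_all
  have h': "\<bar>X - k*L^2\<bar> \<le> d" using h X_def d_def by simp
  have "colf L p q = (if \<bar>X - L^2\<bar> \<le> d then 1 else if \<bar>X - 3*L^2\<bar> \<le> d then 3
     else if \<bar>X - 4*L^2\<bar> \<le> d then 4 else 0)" unfolding colf_def X_def d_def by (rule refl)
  also have "\<dots> = k" using k h' d unfolding C3_def abs_le_iff by auto
  finally show ?thesis .
qed

lemma colf_C3:
  assumes "C3 (colf L p q)"
  shows "\<bar>(dist p q)^2 - colf L p q * L^2\<bar> \<le> L^2/10000"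
proof -
  define X where "X = (dist p q)^2"
  define d where "d = L^2/10000"
  have cf: "colf L p q = (if \<bar>X - L^2\<bar> \<le> d then 1 else if \<bar>X - 3*L^2\<bar> \<le> d then 3
     else if \<bar>X - 4*L^2\<bar> \<le> d then 4 else 0)" unfolding colf_def X_def d_def by (rule refl)
  have "\<bar>X - colf L p q * L^2\<bar> \<le> d"
  proof (cases "\<bar>X - L^2\<bar> \<le> d")
    case True thus ?thesis using cf by simp
  next
    case F1: False
    show ?thesis
    proof (cases "\<bar>X - 3*L^2\<bar> \<le> d")
      case True thus ?thesis using cf F1 by simp
    next
      case F2: False
      show ?thesis
      proof (cases "\<bar>X - 4*L^2\<bar> \<le> d")
        case True thus ?thesis using cf F1 F2 by simp
      next
        case False
        hence "colf L p q = 0" using cf F1 F2 by simp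
        thus ?thesis using assms unfolding C3_def by simp
      qed
    qed
  qed
  thus ?thesis unfolding X_def d_def .
qed

lemma sq_close:
  fixes d D L e :: real
  assumes "\<bar>d - D\<bar> \<le> 2*e*L" "d \<ge> 0" "D \<ge> 0" "D \<le> 2*L" "e \<ge> 0" "L \<ge> 0"
  shows "\<bar>d^2 - D^2\<bar> \<le> (2*e*L) * (4*L + 2*e*L)"
proof -
  have "d^2 - D^2 = (d - D) * (d + D)" by (simp add: power2_eq_square algebra_simps)
  hence "\<bar>d^2 - D^2\<bar> = \<bar>d - D\<bar> * (d + D)" using assms by (simp add: abs_mult)
  also have "\<dots> \<le> (2*e*L) * (4*L + 2*e*L)"
  proof (rule mult_mono)
    show "d + D \<le> 4*L + 2*e*L" using assms by (simp add: abs_le_iff)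
  qed (use assms in auto)
  finally show ?thesis .
qed

lemma alg1: "(2*e*L)*(4*L + 2*e*L) = L^2 * (2*e*(4+2*e::real))"
  by (simp add: power2_eq_square algebra_simps)

lemma pair_col:
  fixes a b A B :: pt
  assumes L: "L > 0" and k: "C3 k" and D: "(dist A B)^2 = k*L^2"
    and da: "dist a A \<le> (1/100000) * L" and db: "dist b B \<le> (1/100000) * L"
  shows "colf L a b = k"
proof -
  let ?e = "1/100000 :: real"
  have t1: "dist a b \<le> dist a A + dist A b" "dist A b \<le> dist A B + dist B b"
    "dist A B \<le> dist A a + dist a B" "dist a B \<le> dist a b + dist b B" by (rule dist_triangle)+
  have "dist a b \<le> dist a A + dist A B + dist B b" using t1 by linarith
  moreover have "dist A B \<le> dist A a + dist a b + dist b B" using t1 by linarith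
  moreover have "dist A a \<le> ?e * L" "dist B b \<le> ?e * L" using da db by (simp_all add: dist_commute)
  ultimately have "dist a b - dist A B \<le> 2*?e*L" "dist A B - dist a b \<le> 2*?e*L" by (simp_all add: dist_commute)
  hence c1: "\<bar>dist a b - dist A B\<bar> \<le> 2*?e*L" unfolding abs_le_iff by linarith
  have k4: "k \<le> 4" using k unfolding C3_def by auto
  have "k*L^2 \<le> 4*L^2" by (rule mult_right_mono[OF k4]) simp
  hence "(dist A B)^2 \<le> 4*L^2" using D by linarith
  moreover have "(2*L)^2 = 4*L^2" by (simp add: power_mult_distrib)
  ultimately have "(dist A B)^2 \<le> (2*L)^2" by simp
  hence c2: "dist A B \<le> 2*L" by (rule power2_le_imp_le) (use L in simp)
  have "\<bar>(dist a b)^2 - (dist A B)^2\<bar> \<le> (2*?e*L) * (4*L + 2*?e*L)"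
    by (rule sq_close[OF c1 _ _ c2]) (simp_all add: less_imp_le[OF L])
  also have "\<dots> = L^2 * (2*?e*(4 + 2*?e))" by (rule alg1)
  also have "\<dots> \<le> L^2 * (1/10000)" by (rule mult_left_mono) auto
  also have "\<dots> = L^2/10000" by simp
  finally have "\<bar>(dist a b)^2 - (dist A B)^2\<bar> \<le> L^2/10000" .
  hence "\<bar>(dist a b)^2 - k*L^2\<bar> \<le> L^2/10000" by (simp only: D)
  thus ?thesis by (rule colf_val[OF L k])
qed

lemma cong_col:
  fixes TA TB TC a b c :: pt
  assumes L: "L > 0" and rbT: "rb ((dist TA TB)^2/L^2) ((dist TB TC)^2/L^2) ((dist TA TC)^2/L^2)"
    and ms: "min_side (TA,TB,TC) = L"
    and ec: "eps_congruent (1/100000) (TA,TB,TC) a b c"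
  shows "rb (colf L a b) (colf L b c) (colf L a c)"
proof -
  obtain A B C where ABC: "dist A B = dist TA TB" "dist B C = dist TB TC" "dist A C = dist TA TC"
    "dist a A \<le> (1/100000) * L" "dist b B \<le> (1/100000) * L" "dist c C \<le> (1/100000) * L"
    using ec ms unfolding eps_congruent_def by auto
  have k: "C3 ((dist TA TB)^2/L^2)" "C3 ((dist TB TC)^2/L^2)" "C3 ((dist TA TC)^2/L^2)" using rb_C3[OF rbT] by auto
  have L2: "L^2 > 0" using L by simp
  have "colf L a b = (dist TA TB)^2/L^2" by (rule pair_col[OF L k(1) _ ABC(4) ABC(5)]) (use ABC(1) L2 in simp)
  moreover have "colf L b c = (dist TB TC)^2/L^2" by (rule pair_col[OF L k(2) _ ABC(5) ABC(6)]) (use ABC(2) L2 in simp)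
  moreover have "colf L a c = (dist TA TC)^2/L^2" by (rule pair_col[OF L k(3) _ ABC(4) ABC(6)]) (use ABC(3) L2 in simp)
  ultimately show ?thesis using rbT by simp
qed

lemma rb_relabel:
  fixes col :: "'a \<Rightarrow> 'a \<Rightarrow> real"
  assumes sym: "\<And>p q. col p q = col q p"
    and r: "rb (col a b) (col b c) (col a c)" and e: "{u,v,z} = {a,b,c}"
    and d: "u\<noteq>v" "u\<noteq>z" "v\<noteq>z"
  shows "rb (col u v) (col u z) (col v z)"
proof -
  have "{col u v, col u z, col v z} = {col a b, col b c, col a c}"
  proof -
    have "u \<in> {a,b,c}" "v \<in> {a,b,c}" "z \<in> {a,b,c}" "a \<in> {u,v,z}" "b \<in> {u,v,z}" "c \<in> {u,v,z}" using e by blast+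
    thus ?thesis using d sym by auto
  qed
  thus ?thesis using r unfolding rb_def by simp
qed

lemma card3_distinct: "card {u,v,z} = 3 \<Longrightarrow> u \<noteq> v \<and> u \<noteq> z \<and> v \<noteq> z"
  by (cases "u = v"; cases "u = z"; cases "v = z"; simp add: card_insert_if)


theorem lemma3p4:
  fixes T :: "pt \<times> pt \<times> pt" and n :: nat
  assumes "triangle_type T 90 60 30" and "n \<ge> 1"
  shows "real (h n T) \<le> real n ^ 3 / 16"
proof -
  obtain TA TB TC where T: "T = (TA,TB,TC)" by (cases T) auto
  have "PP (dist TA TB) (dist TB TC) (dist TA TC)" using tri_sides assms(1) T by simp
  then obtain L where L: "L > 0" "min (dist TA TB) (min (dist TB TC) (dist TA TC)) = L"
    and rbT: "rb ((dist TA TB)^2/L^2) ((dist TB TC)^2/L^2) ((dist TA TC)^2/L^2)"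
    unfolding PP_def by blast
  have ms: "min_side (TA,TB,TC) = L" using L unfolding min_side_def by simp
  define col where "col = colf L"
  have csym: "\<And>p q. col p q = col q p" unfolding col_def by (rule colf_sym)
  let ?e = "1/100000::real"
  have bound: "real (count_cong ?e T P) \<le> real n ^ 3 / 16" if P: "finite P" "card P = n" for P
  proof -
    define E where "E = {S. S \<subseteq> P \<and> card S = 3 \<and> (\<exists>a b c. S = {a,b,c} \<and> eps_congruent ?e T a b c)}"
    have cc: "count_cong ?e T P = card E" unfolding count_cong_def E_def ..
    have edge: "rb (col u v) (col u z) (col v z)" if uvz: "{u,v,z} \<in> E" "u\<noteq>v" "u\<noteq>z" "v\<noteq>z" for u v z
    proof -
      obtain a b c where abc: "{u,v,z} = {a,b,c}" "eps_congruent ?e T a b c" using uvz(1) unfolding E_def by blast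
      have "rb (col a b) (col b c) (col a c)" unfolding col_def using cong_col[OF L(1) rbT ms] abc(2) T by simp
      thus ?thesis using rb_relabel[where col=col, OF csym _ abc(1) uvz(2,3,4)] by blast
    qed
    have E3: "\<And>e. e\<in>E \<Longrightarrow> e \<subseteq> P \<and> card e = 3" by (auto simp: E_def)
    have hedge: "\<exists>x\<in>e. \<exists>y\<in>e. x\<noteq>y \<and> col x y = 4" if e: "e\<in>E" for e
    proof -
      obtain a b c where abc: "e = {a,b,c}" using e unfolding E_def by blast
      have "card {a,b,c} = 3" using E3[OF e] abc by simp
      hence d: "a \<noteq> b \<and> a \<noteq> c \<and> b \<noteq> c" by (rule card3_distinct)
      have "rb (col a b) (col a c) (col b c)" using edge[of a b c] e abc d by simp
      hence "col a b = 4 \<or> col a c = 4 \<or> col b c = 4" unfolding rb_iff by auto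
      thus ?thesis using abc d by auto
    qed
    have match: "y = y'" if SP: "S \<subseteq> P" and cov: "\<forall>u\<in>S. \<forall>v\<in>S. u\<noteq>v \<longrightarrow> (\<exists>z\<in>S. {u,v,z}\<in>E)"
      and xyS: "x\<in>S" "y\<in>S" "y'\<in>S" "x\<noteq>y" "x\<noteq>y'" and hx: "col x y = 4" "col x y' = 4" for S x y y'
    proof (rule ccontr)
      assume yy: "y \<noteq> y'"
      have cov': "\<exists>z\<in>S. z\<noteq>u \<and> z\<noteq>v \<and> rb (col u v) (col u z) (col v z)" if "u\<in>S" "v\<in>S" "u\<noteq>v" for u v
      proof -
        have ex: "\<exists>z\<in>S. {u,v,z}\<in>E" using mp[OF bspec[OF bspec[OF cov that(1)] that(2)] that(3)] .
        then obtain z where z: "z\<in>S" "{u,v,z}\<in>E" by (rule bexE)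
        have "card {u,v,z} = 3" using E3[OF z(2)] by simp
        hence d: "u \<noteq> v \<and> u \<noteq> z \<and> v \<noteq> z" by (rule card3_distinct)
        hence "rb (col u v) (col u z) (col v z)" using edge[OF z(2)] by simp
        thus ?thesis using z(1) d by (intro bexI[where x=z]) auto
      qed
      interpret cb: combo S col
      proof
        show "\<And>u v. col u v = col v u" by (rule csym)
        show "C3 (col u v)" if "u\<in>S" "v\<in>S" "u\<noteq>v" for u v
          using cov'[OF that] rb_C3 by blast
        show "\<exists>z\<in>S. z\<noteq>u \<and> z\<noteq>v \<and> rb (col u v) (col u z) (col v z)" if "u\<in>S" "v\<in>S" "u\<noteq>v" for u v
          by (rule cov'[OF that])
        fix p0 p1 p2 p3
        assume C: "C3 (col p0 p1)" "C3 (col p0 p2)" "C3 (col p0 p3)" "C3 (col p1 p2)" "C3 (col p1 p3)" "C3 (col p2 p3)"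
        show "Q4 (col p0 p1) (col p0 p2) (col p0 p3) (col p1 p2) (col p1 p3) (col p2 p3) = 0"
        proof (rule four_geo[OF L(1), where e="1/10000"])
          show "C3 (col p0 p1)" "C3 (col p0 p2)" "C3 (col p0 p3)" "C3 (col p1 p2)" "C3 (col p1 p3)" "C3 (col p2 p3)"
            by (rule C)+
          show "\<bar>(dist p0 p1)^2 - col p0 p1 * L^2\<bar> \<le> 1/10000 * L^2" using colf_C3[of L p0 p1] C(1) unfolding col_def by simp
          show "\<bar>(dist p0 p2)^2 - col p0 p2 * L^2\<bar> \<le> 1/10000 * L^2" using colf_C3[of L p0 p2] C(2) unfolding col_def by simp
          show "\<bar>(dist p0 p3)^2 - col p0 p3 * L^2\<bar> \<le> 1/10000 * L^2" using colf_C3[of L p0 p3] C(3) unfolding col_def by simp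
          show "\<bar>(dist p1 p2)^2 - col p1 p2 * L^2\<bar> \<le> 1/10000 * L^2" using colf_C3[of L p1 p2] C(4) unfolding col_def by simp
          show "\<bar>(dist p1 p3)^2 - col p1 p3 * L^2\<bar> \<le> 1/10000 * L^2" using colf_C3[of L p1 p3] C(5) unfolding col_def by simp
          show "\<bar>(dist p2 p3)^2 - col p2 p3 * L^2\<bar> \<le> 1/10000 * L^2" using colf_C3[of L p2 p3] C(6) unfolding col_def by simp
        qed simp
      qed
      show False using cb.main[OF xyS(1,2,3) xyS(4,5) yy hx] .
    qed
    have hs: "\<And>x y. col x y = 4 \<Longrightarrow> col y x = 4" using csym by metis
    have lg: "(\<Sum>e\<in>E. prod (\<lambda>_. 1::real) e) \<le> (sum (\<lambda>_. 1::real) P)^3/16"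
      using lagr[where hyp="\<lambda>x y. col x y = 4" and w="\<lambda>_. 1::real", OF P(1) E3 hs hedge match] by simp
    from lg have "real (card E) \<le> (real (card P))^3/16" by simp
    thus ?thesis using cc P by simp
  qed
  define X where "X = {count_cong ?e T P | P. finite P \<and> card P = n}"
  have Xb: "\<And>k. k \<in> X \<Longrightarrow> real k \<le> real n ^ 3 / 16" using bound unfolding X_def by blast
  have "h n T \<le> h_eps n T ?e"
    unfolding h_def Inf_nat_def by (rule Least_le) auto
  also have "h_eps n T ?e = Sup X" unfolding h_eps_def X_def ..
  finally have hX: "h n T \<le> Sup X" .
  have "real (Sup X) \<le> real n ^ 3 / 16"
  proof (cases "X = {}")
    case True thus ?thesis by simp
  next
    case False
    have "X \<subseteq> {..n^3}"
    proof
      fix k assume k: "k \<in> X"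
      have "real k \<le> real n ^ 3 / 16" using Xb k .
      also have "\<dots> \<le> real (n^3)" by simp
      finally show "k \<in> {..n^3}" by simp
    qed
    hence "finite X" by (rule finite_subset) simp
    hence "Sup X \<in> X" using False by (simp add: Sup_nat_def)
    thus ?thesis using Xb by blast
  qed
  thus ?thesis using hX by (meson of_nat_le_iff order_trans)
qed


end
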